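(* Assume $P_S(s)>0$ for all $s$ and $P_{Y|X}(y|x)>0$ for all $x,y$, and let $f:(0,\infty)\to\mathbb R$ be continuously differentiable with the saddle property. Let $Q\in\mathcal Q$, put $a(\hat s|s)=Q_{S,\widehat S}(s,\hat s)/P_S(s)$ and $b=Q_X$, and assume $a(\hat s|s)>0$ for all $s,\hat s$. Let $\lambda\ge0$ satisfy $\lambda\big(\Psi(b)-\Phi(a)\big)=0$, let $\mu^b\in\mathbb R$, $\mu^a:\mathcal S\to\mathbb R$ be arbitrary, and let $\nu^b:\mathcal X\to[0,\infty)$ satisfy $\sum_x\nu^b(x)b(x)=0$. Define $$\delta(s,\hat s)=-\frac{\lambda}{P_S(s)}\frac{\partial\Phi}{\partial a(\hat s|s)}(a)+\mu^a(s),\qquad \rho(x)=\lambda\frac{\partial\Psi}{\partial b(x)}(b)+\mu^b+\nu^b(x).$$ Then $Q$ minimizes $Q'\mapsto\sum_{(s,x,y,\hat s)\in\mathcal Z}Q'(s,x,y,\hat s)\big(\delta(s,\hat s)+\rho(x)\big)$ over $Q'\in\mathcal Q$.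
   Context: $\mathcal S,\mathcal X,\mathcal Y,\widehat{\mathcal S}$ are finite nonempty sets, $\mathcal Z=\mathcal S\times\mathcal X\times\mathcal Y\times\widehat{\mathcal S}$, $P_S$ a fixed pmf on $\mathcal S$, $P_{Y|X}$ a fixed channel from $\mathcal X$ to $\mathcal Y$. $\mathcal Q$ is the set of pmfs on $\mathcal Z$ of the form $Q(s,x,y,\hat s)=P_S(s)Q_{X|S}(x|s)P_{Y|X}(y|x)Q_{\widehat S|Y}(\hat s|y)$ for some kernels $Q_{X|S}$, $Q_{\widehat S|Y}$; $Q_X$, $Q_{S,\widehat S}$ denote marginals. For $a\in(0,\infty)^{\mathcal S\times\widehat{\mathcal S}}$ let $\bar a(\hat s)=\sum_{s'}a(\hat s|s')P_S(s')$ and $\Phi(a)=\sum_{s,\hat s}a(\hat s|s)P_S(s)f\big(\bar a(\hat s)/a(\hat s|s)\big)$. For $b\in\mathbb R^{\mathcal X}$ with $b_Y(y):=\sum_{x'}P_{Y|X}(y|x')b(x')>0$ for all $y$, let $\Psi(b)=\sum_{x,y}b(x)P_{Y|X}(y|x)f\big(b_Y(y)/P_{Y|X}(y|x)\big)$. (On kernels/pmfs these equal the $f$-mutual informations of $(s,\hat s)\mapsto a(\hat s|s)P_S(s)$ and $(x,y)\mapsto b(x)P_{Y|X}(y|x)$.) $f$-mutual information: for $f$ convex on $(0,\infty)$, $f'(\infty)=\lim_{t\to\infty}f(t)/t$, and for a joint pmf $p(u,v)$ on a finite product set, $I_f(p)=\sum_{u,v}\phi(u,v)$ with $\phi=p(u,v)f(p(u)p(v)/p(u,v))$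 if $p(u,v)>0$, $\phi=p(u)p(v)f'(\infty)$ if $p(u,v)=0<p(u)p(v)$, $\phi=0$ if $p(u)p(v)=0$. $f$ has the saddle property if $f$ is convex on $(0,\infty)$ and, for all finite sets $\mathcal U,\mathcal V$ and every kernel $p(v|u)$, $p_U\mapsto I_f(p_U(u)p(v|u))$ is concave on the pmfs on $\mathcal U$. *)

theory Defs
  imports "HOL-Analysis.Analysis"
begin

definition is_pmf :: "('a::finite \<Rightarrow> real) \<Rightarrow> bool" where
  "is_pmf p \<longleftrightarrow> (\<forall>x. 0 \<le> p x) \<and> (\<Sum>x\<in>UNIV. p x) = 1"

definition is_kernel :: "('a::finite \<Rightarrow> 'b::finite \<Rightarrow> real) \<Rightarrow> bool" where
  "is_kernel K \<longleftrightarrow> (\<forall>u. is_pmf (K u))"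

text \<open>The set Q of joint pmfs P_S(s) Q(x|s) P(y|x) Q(shat|y); PYX x y = P_{Y|X}(y|x)\<close>
definition Qset :: "('s::finite \<Rightarrow> real) \<Rightarrow> ('x::finite \<Rightarrow> 'y::finite \<Rightarrow> real)
    \<Rightarrow> ('s \<times> 'x \<times> 'y \<times> 'h::finite \<Rightarrow> real) set" where
  "Qset PS PYX = {Q. \<exists>QXS QHY. is_kernel QXS \<and> is_kernel QHY \<and>
      Q = (\<lambda>(s,x,y,h). PS s * QXS s x * PYX x y * QHY y h)}"

definition marg_X :: "('s::finite \<times> 'x \<times> 'y::finite \<times> 'h::finite \<Rightarrow> real) \<Rightarrow> 'x \<Rightarrow> real" where
  "marg_X Q x = (\<Sum>s\<in>UNIV. \<Sum>y\<in>UNIV. \<Sum>h\<in>UNIV. Q (s,x,y,h))"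

definition marg_SH :: "('s \<times> 'x::finite \<times> 'y::finite \<times> 'h \<Rightarrow> real) \<Rightarrow> 's \<Rightarrow> 'h \<Rightarrow> real" where
  "marg_SH Q s h = (\<Sum>x\<in>UNIV. \<Sum>y\<in>UNIV. Q (s,x,y,h))"

text \<open>a s h stands for a(shat|s)\<close>
definition Phi :: "('s::finite \<Rightarrow> real) \<Rightarrow> (real \<Rightarrow> real) \<Rightarrow> ('s \<Rightarrow> 'h::finite \<Rightarrow> real) \<Rightarrow> real" where
  "Phi PS f a = (\<Sum>s\<in>UNIV. \<Sum>h\<in>UNIV.
      a s h * PS s * f ((\<Sum>s'\<in>UNIV. a s' h * PS s') / a s h))"

definition Psi :: "('x::finite \<Rightarrow> 'y::finite \<Rightarrow> real) \<Rightarrow> (real \<Rightarrow> real) \<Rightarrow> ('x \<Rightarrow> real) \<Rightarrow> real" where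
  "Psi PYX f b = (\<Sum>x\<in>UNIV. \<Sum>y\<in>UNIV.
      b x * PYX x y * f ((\<Sum>x'\<in>UNIV. PYX x' y * b x') / PYX x y))"

definition dPhi :: "('s::finite \<Rightarrow> real) \<Rightarrow> (real \<Rightarrow> real) \<Rightarrow> ('s \<Rightarrow> 'h::finite \<Rightarrow> real) \<Rightarrow> 's \<Rightarrow> 'h \<Rightarrow> real" where
  "dPhi PS f a s h = deriv (\<lambda>t. Phi PS f (a(s := (a s)(h := t)))) (a s h)"

definition dPsi :: "('x::finite \<Rightarrow> 'y::finite \<Rightarrow> real) \<Rightarrow> (real \<Rightarrow> real) \<Rightarrow> ('x \<Rightarrow> real) \<Rightarrow> 'x \<Rightarrow> real" where
  "dPsi PYX f b x = deriv (\<lambda>t. Psi PYX f (b(x := t))) (b x)"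

definition fprime_inf :: "(real \<Rightarrow> real) \<Rightarrow> ereal" where
  "fprime_inf f = Lim at_top (\<lambda>t. ereal (f t / t))"

definition fMI :: "(real \<Rightarrow> real) \<Rightarrow> 'u set \<Rightarrow> 'v set \<Rightarrow> ('u \<Rightarrow> 'v \<Rightarrow> real) \<Rightarrow> ereal" where
  "fMI f U V p = (\<Sum>u\<in>U. \<Sum>v\<in>V.
     (let pu = (\<Sum>v'\<in>V. p u v'); pv = (\<Sum>u'\<in>U. p u' v) in
      if 0 < p u v then ereal (p u v * f (pu * pv / p u v))
      else if 0 < pu * pv then ereal (pu * pv) * fprime_inf f
      else 0))"

text \<open>Saddle property. Finite sets U, V are taken as finite subsets of nat
  (any finite sets are in bijection with such, and I_f is invariant under relabelling).\<close>
definition saddle_property :: "(real \<Rightarrow> real) \<Rightarrow> bool" where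
  "saddle_property f \<longleftrightarrow> convex_on {0<..} f \<and>
    (\<forall>(U::nat set) (V::nat set) (k::nat \<Rightarrow> nat \<Rightarrow> real).
       finite U \<longrightarrow> finite V \<longrightarrow>
       (\<forall>u\<in>U. (\<forall>v\<in>V. 0 \<le> k u v) \<and> (\<Sum>v\<in>V. k u v) = 1) \<longrightarrow>
       (\<forall>p q \<theta>. (\<forall>u\<in>U. 0 \<le> p u) \<longrightarrow> (\<Sum>u\<in>U. p u) = 1 \<longrightarrow>
                 (\<forall>u\<in>U. 0 \<le> q u) \<longrightarrow> (\<Sum>u\<in>U. q u) = 1 \<longrightarrow>
                 0 \<le> \<theta> \<longrightarrow> \<theta> \<le> 1 \<longrightarrow>
          ereal \<theta> * fMI f U V (\<lambda>u v. p u * k u v)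
            + ereal (1 - \<theta>) * fMI f U V (\<lambda>u v. q u * k u v)
          \<le> fMI f U V (\<lambda>u v. (\<theta> * p u + (1 - \<theta>) * q u) * k u v)))"

end

theory Submission
  imports Defs
begin



lemma convex_tangent01:
  fixes h :: "real \<Rightarrow> real"
  assumes cv: "convex_on {0..1} h" and d: "(h has_real_derivative D) (at 0)"
  shows "h 0 + D \<le> h 1"
proof -
  have lim: "((\<lambda>t. (h t - h 0) / (t - 0)) \<longlongrightarrow> D) (at_right 0)"
    using d unfolding has_field_derivative_iff
    by (metis at_within_Icc_at_right at_right_to_0 tendsto_within_subset top_greatest zero_less_one)
  have ev: "eventually (\<lambda>t. (h t - h 0) / (t - 0) \<le> h 1 - h 0) (at_right 0)"
  proof -
    have "eventually (\<lambda>t. t \<in> {0<..<1}) (at_right (0::real))"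
      using eventually_at_right_field[of _ "0::real"] by (auto intro!: exI[of _ 1]) 
    then show ?thesis
    proof (rule eventually_mono)
      fix t :: real assume t: "t \<in> {0<..<1}"
      have "h ((1 - t) *\<^sub>R 0 + t *\<^sub>R 1) \<le> (1 - t) * h 0 + t * h 1"
        using t by (intro convex_onD_Icc[OF cv]) auto
      then have "h t - h 0 \<le> t * (h 1 - h 0)" by (simp add: algebra_simps)
      then show "(h t - h 0) / (t - 0) \<le> h 1 - h 0" using t by (simp add: divide_le_eq mult.commute)
    qed
  qed
  have "D \<le> h 1 - h 0"
    by (rule tendsto_upperbound[OF lim ev]) simp
  then show ?thesis by simp
qed



definition WPsi :: "('x::finite \<Rightarrow> 'y::finite \<Rightarrow> real) \<Rightarrow> (real \<Rightarrow> real) \<Rightarrow> (real \<Rightarrow> real) \<Rightarrow> ('x \<Rightarrow> real) \<Rightarrow> 'x \<Rightarrow> real" where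
  "WPsi PYX f f' b x = (\<Sum>y\<in>UNIV. PYX x y * f ((\<Sum>x'\<in>UNIV. PYX x' y * b x') / PYX x y))
     + (\<Sum>x1\<in>UNIV. \<Sum>y\<in>UNIV. b x1 * PYX x y * f' ((\<Sum>x'\<in>UNIV. PYX x' y * b x') / PYX x1 y))"

lemma Psi_dir_deriv:
  fixes PYX :: "'x::finite \<Rightarrow> 'y::finite \<Rightarrow> real"
  assumes fd: "\<And>z. z > 0 \<Longrightarrow> (f has_real_derivative f' z) (at z)"
    and Ppos: "\<forall>x y. 0 < PYX x y" and Bpos: "\<forall>y. 0 < (\<Sum>x'\<in>UNIV. PYX x' y * b x')"
  shows "((\<lambda>t. Psi PYX f (\<lambda>x. b x + t * d x)) has_real_derivative (\<Sum>x\<in>UNIV. d x * WPsi PYX f f' b x)) (at 0)"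
proof -
  define B where "B y = (\<Sum>x'\<in>UNIV. PYX x' y * b x')" for y
  define D where "D y = (\<Sum>x'\<in>UNIV. PYX x' y * d x')" for y
  have Bt: "(\<Sum>x'\<in>UNIV. PYX x' y * (b x' + t * d x')) = B y + t * D y" for y t
    by (simp add: B_def D_def algebra_simps sum.distrib sum_distrib_left)
  have trm: "((\<lambda>t. (b x1 + t * d x1) * PYX x1 y * f ((B y + t * D y) / PYX x1 y)) has_real_derivative
      (d x1 * PYX x1 y * f (B y / PYX x1 y) + b x1 * PYX x1 y * (f' (B y / PYX x1 y) * (D y / PYX x1 y)))) (at 0)" for x1 y
  proof -
    have g: "((\<lambda>t. (B y + t * D y) / PYX x1 y) has_real_derivative D y / PYX x1 y) (at 0)"
      using Ppos[rule_format, of x1 y] by (auto intro!: derivative_eq_intros)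
    have pos: "B y / PYX x1 y > 0" using Bpos Ppos by (simp add: B_def)
    have c: "((\<lambda>t. f ((B y + t * D y) / PYX x1 y)) has_real_derivative f' (B y / PYX x1 y) * (D y / PYX x1 y)) (at 0)"
      using DERIV_chain2[where g="\<lambda>t. (B y + t * D y) / PYX x1 y" and x=0, OF _ g] fd[OF pos] by simp
    show ?thesis
      by (rule derivative_eq_intros c | simp)+
  qed
  have raw: "((\<lambda>t. Psi PYX f (\<lambda>x. b x + t * d x)) has_real_derivative
     (\<Sum>x1\<in>UNIV. \<Sum>y\<in>UNIV. d x1 * PYX x1 y * f (B y / PYX x1 y) + b x1 * PYX x1 y * (f' (B y / PYX x1 y) * (D y / PYX x1 y)))) (at 0)"
    unfolding Psi_def Bt by (intro DERIV_sum trm)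
  have eq: "(\<Sum>x1\<in>UNIV. \<Sum>y\<in>UNIV. d x1 * PYX x1 y * f (B y / PYX x1 y) + b x1 * PYX x1 y * (f' (B y / PYX x1 y) * (D y / PYX x1 y)))
     = (\<Sum>x\<in>UNIV. d x * WPsi PYX f f' b x)"
  proof -
    have e1: "b x1 * PYX x1 y * (f' (B y / PYX x1 y) * (D y / PYX x1 y)) = (\<Sum>x\<in>UNIV. d x * (b x1 * PYX x y * f' (B y / PYX x1 y)))" for x1 y
    proof -
      have ne: "PYX x1 y \<noteq> 0" using Ppos by (metis less_irrefl)
      have "b x1 * PYX x1 y * (f' (B y / PYX x1 y) * (D y / PYX x1 y)) = b x1 * f' (B y / PYX x1 y) * D y"
        using ne by simp
      then show ?thesis by (simp add: D_def sum_distrib_left ac_simps)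
    qed
    define C where "C x1 y x = b x1 * PYX x y * f' (B y / PYX x1 y)" for x1 y x
    have s1: "(\<Sum>x1\<in>UNIV. \<Sum>y\<in>UNIV. d x1 * PYX x1 y * f (B y / PYX x1 y))
        = (\<Sum>x\<in>UNIV. d x * (\<Sum>y\<in>UNIV. PYX x y * f (B y / PYX x y)))"
      by (simp add: sum_distrib_left mult.assoc)
    have s2: "(\<Sum>x1\<in>UNIV. \<Sum>y\<in>UNIV. \<Sum>x\<in>UNIV. d x * C x1 y x)
        = (\<Sum>x\<in>UNIV. d x * (\<Sum>x1\<in>UNIV. \<Sum>y\<in>UNIV. C x1 y x))"
    proof -
      have "(\<Sum>x1\<in>UNIV. \<Sum>y\<in>UNIV. \<Sum>x\<in>UNIV. d x * C x1 y x)
         = (\<Sum>x1\<in>UNIV. \<Sum>x\<in>UNIV. \<Sum>y\<in>UNIV. d x * C x1 y x)"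
        by (rule sum.cong[OF refl], rule sum.swap)
      also have "\<dots> = (\<Sum>x\<in>UNIV. \<Sum>x1\<in>UNIV. \<Sum>y\<in>UNIV. d x * C x1 y x)"
        by (rule sum.swap)
      also have "\<dots> = (\<Sum>x\<in>UNIV. d x * (\<Sum>x1\<in>UNIV. \<Sum>y\<in>UNIV. C x1 y x))"
        by (simp add: sum_distrib_left)
      finally show ?thesis .
    qed
    have "(\<Sum>x1\<in>UNIV. \<Sum>y\<in>UNIV. d x1 * PYX x1 y * f (B y / PYX x1 y) + b x1 * PYX x1 y * (f' (B y / PYX x1 y) * (D y / PYX x1 y)))
       = (\<Sum>x1\<in>UNIV. \<Sum>y\<in>UNIV. d x1 * PYX x1 y * f (B y / PYX x1 y)) + (\<Sum>x1\<in>UNIV. \<Sum>y\<in>UNIV. \<Sum>x\<in>UNIV. d x * C x1 y x)"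
      unfolding e1 C_def by (simp only: sum.distrib)
    also have "\<dots> = (\<Sum>x\<in>UNIV. d x * WPsi PYX f f' b x)"
      unfolding s1 s2 unfolding WPsi_def B_def[symmetric] C_def by (simp add: distrib_left sum.distrib)
    finally show ?thesis .
  qed
  show ?thesis using raw eq by simp
qed
definition WPhi :: "('s::finite \<Rightarrow> real) \<Rightarrow> (real \<Rightarrow> real) \<Rightarrow> (real \<Rightarrow> real) \<Rightarrow> ('s \<Rightarrow> 'h::finite \<Rightarrow> real) \<Rightarrow> 's \<Rightarrow> 'h \<Rightarrow> real" where
  "WPhi PS f f' a s0 h0 = PS s0 * (f ((\<Sum>s'\<in>UNIV. a s' h0 * PS s') / a s0 h0)
       - (\<Sum>s'\<in>UNIV. a s' h0 * PS s') / a s0 h0 * f' ((\<Sum>s'\<in>UNIV. a s' h0 * PS s') / a s0 h0)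
       + (\<Sum>s\<in>UNIV. PS s * f' ((\<Sum>s'\<in>UNIV. a s' h0 * PS s') / a s h0)))"

lemma Phi_dir_deriv:
  fixes PS :: "'s::finite \<Rightarrow> real" and a d :: "'s \<Rightarrow> 'h::finite \<Rightarrow> real"
  assumes fd: "\<And>z. z > 0 \<Longrightarrow> (f has_real_derivative f' z) (at z)"
    and PSpos: "\<forall>s. 0 < PS s" and apos: "\<forall>s h. 0 < a s h"
  shows "((\<lambda>t. Phi PS f (\<lambda>s h. a s h + t * d s h)) has_real_derivative (\<Sum>s\<in>UNIV. \<Sum>h\<in>UNIV. d s h * WPhi PS f f' a s h)) (at 0)"
proof -
  define A where "A h = (\<Sum>s'\<in>UNIV. a s' h * PS s')" for h
  define D where "D h = (\<Sum>s'\<in>UNIV. d s' h * PS s')" for h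
  define r where "r s h = A h / a s h" for s h
  have Apos: "A h > 0" for h
    unfolding A_def using PSpos apos by (intro sum_pos) (auto intro: mult_pos_pos)
  have At: "(\<Sum>s'\<in>UNIV. (a s' h + t * d s' h) * PS s') = A h + t * D h" for h t
    by (simp add: A_def D_def algebra_simps sum.distrib sum_distrib_left)
  have trm: "((\<lambda>t. (a s h + t * d s h) * PS s * f ((A h + t * D h) / (a s h + t * d s h))) has_real_derivative
      (d s h * PS s * f (r s h) + PS s * f' (r s h) * (D h - r s h * d s h))) (at 0)" for s h
  proof -
    have ne: "a s h \<noteq> 0" using apos by (metis less_irrefl)
    have g: "((\<lambda>t. (A h + t * D h) / (a s h + t * d s h)) has_real_derivative (D h - r s h * d s h) / a s h) (at 0)"
      by (rule DERIV_cong, (rule derivative_eq_intros refl | simp add: ne)+) (simp add: r_def field_simps ne)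
    have pos: "r s h > 0" using Apos apos by (simp add: r_def)
    have c: "((\<lambda>t. f ((A h + t * D h) / (a s h + t * d s h))) has_real_derivative f' (r s h) * ((D h - r s h * d s h) / a s h)) (at 0)"
      using DERIV_chain2[where g="\<lambda>t. (A h + t * D h) / (a s h + t * d s h)" and x=0, OF _ g] fd[OF pos] by (simp add: r_def)
    show ?thesis
      by (rule DERIV_cong, (rule derivative_eq_intros c refl | simp)+) (simp add: r_def field_simps ne)
  qed
  have raw: "((\<lambda>t. Phi PS f (\<lambda>s h. a s h + t * d s h)) has_real_derivative
     (\<Sum>s\<in>UNIV. \<Sum>h\<in>UNIV. d s h * PS s * f (r s h) + PS s * f' (r s h) * (D h - r s h * d s h))) (at 0)"
    unfolding Phi_def At by (intro DERIV_sum trm)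
  have eq: "(\<Sum>s\<in>UNIV. \<Sum>h\<in>UNIV. d s h * PS s * f (r s h) + PS s * f' (r s h) * (D h - r s h * d s h))
     = (\<Sum>s\<in>UNIV. \<Sum>h\<in>UNIV. d s h * WPhi PS f f' a s h)"
  proof -
    have e1: "d s h * PS s * f (r s h) + PS s * f' (r s h) * (D h - r s h * d s h)
       = d s h * (PS s * (f (r s h) - r s h * f' (r s h))) + (\<Sum>s0\<in>UNIV. d s0 h * (PS s0 * (PS s * f' (r s h))))" for s h
      by (simp add: D_def sum_distrib_left sum_distrib_right algebra_simps)
    have s2: "(\<Sum>s\<in>UNIV. \<Sum>h\<in>UNIV. \<Sum>s0\<in>UNIV. d s0 h * (PS s0 * (PS s * f' (r s h))))
       = (\<Sum>s0\<in>UNIV. \<Sum>h\<in>UNIV. d s0 h * (PS s0 * (\<Sum>s\<in>UNIV. PS s * f' (r s h))))"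
    proof -
      have "(\<Sum>s\<in>UNIV. \<Sum>h\<in>UNIV. \<Sum>s0\<in>UNIV. d s0 h * (PS s0 * (PS s * f' (r s h))))
          = (\<Sum>h\<in>UNIV. \<Sum>s\<in>UNIV. \<Sum>s0\<in>UNIV. d s0 h * (PS s0 * (PS s * f' (r s h))))"
        by (rule sum.swap)
      also have "\<dots> = (\<Sum>h\<in>UNIV. \<Sum>s0\<in>UNIV. \<Sum>s\<in>UNIV. d s0 h * (PS s0 * (PS s * f' (r s h))))"
        by (rule sum.cong[OF refl], rule sum.swap)
      also have "\<dots> = (\<Sum>s0\<in>UNIV. \<Sum>h\<in>UNIV. \<Sum>s\<in>UNIV. d s0 h * (PS s0 * (PS s * f' (r s h))))"
        by (rule sum.swap)
      also have "\<dots> = (\<Sum>s0\<in>UNIV. \<Sum>h\<in>UNIV. d s0 h * (PS s0 * (\<Sum>s\<in>UNIV. PS s * f' (r s h))))"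
        by (simp add: sum_distrib_left)
      finally show ?thesis .
    qed
    have "(\<Sum>s\<in>UNIV. \<Sum>h\<in>UNIV. d s h * PS s * f (r s h) + PS s * f' (r s h) * (D h - r s h * d s h))
      = (\<Sum>s\<in>UNIV. \<Sum>h\<in>UNIV. d s h * (PS s * (f (r s h) - r s h * f' (r s h))))
        + (\<Sum>s\<in>UNIV. \<Sum>h\<in>UNIV. \<Sum>s0\<in>UNIV. d s0 h * (PS s0 * (PS s * f' (r s h))))"
      unfolding e1 by (simp only: sum.distrib)
    also have "\<dots> = (\<Sum>s\<in>UNIV. \<Sum>h\<in>UNIV. d s h * WPhi PS f f' a s h)"
      unfolding s2 unfolding WPhi_def A_def[symmetric] r_def[symmetric]
      by (simp add: distrib_left sum.distrib)
    finally show ?thesis .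
  qed
  show ?thesis using raw eq by simp
qed

lemma shift_deriv:
  fixes g :: "real \<Rightarrow> real"
  assumes "(g has_real_derivative D) (at 0)"
  shows "((\<lambda>t. g (t - c)) has_real_derivative D) (at c)"
proof -
  have d1: "((\<lambda>t. t - c) has_real_derivative 1) (at c)" by (auto intro!: derivative_eq_intros)
  have "((\<lambda>t. g (t - c)) has_real_derivative D * 1) (at c)"
    by (rule DERIV_chain2[where g="\<lambda>t. t - c", OF _ d1]) (simp add: assms)
  then show ?thesis by simp
qed

lemma dPsi_eq:
  fixes PYX :: "'x::finite \<Rightarrow> 'y::finite \<Rightarrow> real"
  assumes fd: "\<And>z. z > 0 \<Longrightarrow> (f has_real_derivative f' z) (at z)"
    and Ppos: "\<forall>x y. 0 < PYX x y" and Bpos: "\<forall>y. 0 < (\<Sum>x'\<in>UNIV. PYX x' y * b x')"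
  shows "dPsi PYX f b x = WPsi PYX f f' b x"
proof -
  define e where "e x' = (if x' = x then 1 else (0::real))" for x'
  have g: "((\<lambda>u. Psi PYX f (\<lambda>x'. b x' + u * e x')) has_real_derivative WPsi PYX f f' b x) (at 0)"
  proof -
    have eq: "(\<Sum>x'\<in>UNIV. e x' * WPsi PYX f f' b x') = WPsi PYX f f' b x"
      unfolding e_def by (simp add: if_distrib[where f="\<lambda>z. z * _"] cong: if_cong)
    show ?thesis using Psi_dir_deriv[OF fd Ppos Bpos, of e] unfolding eq .
  qed
  have fq: "(\<lambda>t. Psi PYX f (b(x := t))) = (\<lambda>t. Psi PYX f (\<lambda>x'. b x' + (t - b x) * e x'))"
    by (rule ext, rule arg_cong[where f="Psi PYX f"]) (auto simp: e_def)
  show ?thesis unfolding dPsi_def fq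
    by (rule DERIV_imp_deriv, rule shift_deriv[OF g])
qed

lemma dPhi_eq:
  fixes PS :: "'s::finite \<Rightarrow> real" and a :: "'s \<Rightarrow> 'h::finite \<Rightarrow> real"
  assumes fd: "\<And>z. z > 0 \<Longrightarrow> (f has_real_derivative f' z) (at z)"
    and PSpos: "\<forall>s. 0 < PS s" and apos: "\<forall>s h. 0 < a s h"
  shows "dPhi PS f a s h = WPhi PS f f' a s h"
proof -
  define e where "e s' h' = (if s' = s \<and> h' = h then 1 else (0::real))" for s' h'
  have g: "((\<lambda>u. Phi PS f (\<lambda>s' h'. a s' h' + u * e s' h')) has_real_derivative WPhi PS f f' a s h) (at 0)"
  proof -
    have "(\<Sum>s'\<in>UNIV. \<Sum>h'\<in>UNIV. e s' h' * WPhi PS f f' a s' h') = WPhi PS f f' a s h"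
    proof -
      have "\<And>s' h'. e s' h' * WPhi PS f f' a s' h' = (if h' = h then (if s' = s then WPhi PS f f' a s h else 0) else 0)"
        by (simp add: e_def)
      then show ?thesis by (simp add: sum.delta)
    qed
    then show ?thesis using Phi_dir_deriv[OF fd PSpos apos, of e] by (simp only:)
  qed
  have fq: "(\<lambda>t. Phi PS f (a(s := (a s)(h := t)))) = (\<lambda>t. Phi PS f (\<lambda>s' h'. a s' h' + (t - a s h) * e s' h'))"
    by (rule ext, rule arg_cong[where f="Phi PS f"]) (auto simp: e_def fun_eq_iff)
  show ?thesis unfolding dPhi_def fq
    by (rule DERIV_imp_deriv, rule shift_deriv[OF g])
qed




lemma persp:
  fixes f :: "real \<Rightarrow> real" and v1 v2 u1 u2 t :: real
  assumes cv: "convex_on {0<..} f" and "0 < v1" "0 < v2" "0 < u1" "0 < u2" "0 \<le> t" "t \<le> 1"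
  shows "((1-t) * v1+t * v2) * f (((1-t) * u1+t * u2)/((1-t) * v1+t * v2)) \<le> (1-t) * (v1 * f(u1/v1)) + t * (v2 * f(u2/v2))"
proof -
  define V where "V = (1-t) * v1+t * v2"
  have V: "0 < V" using assms unfolding V_def
    by (cases "t = 0") (auto intro: add_nonneg_pos add_pos_nonneg)
  define \<alpha> where "\<alpha> = (1-t) * v1/V"
  have a0: "0 \<le> \<alpha>" "\<alpha> \<le> 1" using assms V unfolding \<alpha>_def V_def by (auto simp: field_simps)
  have v1: "v1 \<noteq> 0" and v2: "v2 \<noteq> 0" and Vn: "V \<noteq> 0" using assms V by auto
  have oa: "1 - \<alpha> = t * v2 / V" using Vn unfolding \<alpha>_def by (simp add: V_def field_simps)
  have "(1-\<alpha>) *\<^sub>R (u2/v2) + \<alpha> *\<^sub>R (u1/v1) = t * u2 / V + (1-t) * u1 / V"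
    unfolding oa using v1 v2 Vn by (simp add: \<alpha>_def)
  then have "((1-t) * u1+t * u2)/V = (1-\<alpha>) *\<^sub>R (u2/v2) + \<alpha> *\<^sub>R (u1/v1)"
    by (simp add: add_divide_distrib)
  then have "f (((1-t) * u1+t * u2)/V) \<le> (1-\<alpha>) * f (u2/v2) + \<alpha> * f (u1/v1)"
    using convex_onD[OF cv a0, of "u2/v2" "u1/v1"] assms by simp
  then have "V * f (((1-t) * u1+t * u2)/V) \<le> V * ((1-\<alpha>) * f (u2/v2) + \<alpha> * f (u1/v1))"
    using V by (simp add: mult_left_mono)
  also have "\<dots> = (1-t) * (v1 * f(u1/v1)) + t * (v2 * f(u2/v2))"
  proof -
    have e1: "V * (1-\<alpha>) = t * v2" using oa Vn by simp
    have e2: "V * \<alpha> = (1-t) * v1" using Vn by (simp add: \<alpha>_def)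
    have "V * ((1-\<alpha>) * f (u2/v2) + \<alpha> * f (u1/v1)) = (V * (1-\<alpha>)) * f (u2/v2) + (V * \<alpha>) * f (u1/v1)"
      by (simp add: distrib_left mult.assoc)
    then show ?thesis unfolding e1 e2 by (simp add: mult.assoc)
  qed
  finally show ?thesis unfolding V_def .
qed

lemma Phi_convex_seg:
  fixes f :: "real \<Rightarrow> real" and PS :: "'s::finite \<Rightarrow> real" and a a' :: "'s \<Rightarrow> 'h::finite \<Rightarrow> real"
  assumes cv: "convex_on {0<..} f" and PSpos: "\<forall>s. 0 < PS s"
    and apos: "\<forall>s h. 0 < a s h" and a'pos: "\<forall>s h. 0 < a' s h"
  shows "convex_on {0..1} (\<lambda>t. Phi PS f (\<lambda>s h. a s h + t * (a' s h - a s h)))"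
proof (rule convex_onI)
  show "convex {0..1::real}" by simp
  fix t x y :: real assume t: "0 < t" "t < 1" and xy: "x \<in> {0..1}" "y \<in> {0..1}"
  define ax where "ax s h = a s h + x * (a' s h - a s h)" for s h
  define ay where "ay s h = a s h + y * (a' s h - a s h)" for s h
  have pos: "0 < a s h + z * (a' s h - a s h)" if "z \<in> {0..1}" for s h z
  proof -
    have "a s h + z * (a' s h - a s h) = (1 - z) * a s h + z * a' s h" by (simp add: algebra_simps)
    moreover have "0 < (1 - z) * a s h + z * a' s h"
    proof (cases "z = 0")
      case False
      then have "0 < z * a' s h" using that a'pos by auto
      moreover have "0 \<le> (1 - z) * a s h" using that apos by (simp add: less_imp_le)
      ultimately show ?thesis by linarith
    qed (use apos in auto)
    ultimately show ?thesis by simp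
  qed
  have axp: "0 < ax s h" "0 < ay s h" for s h using pos xy unfolding ax_def ay_def by auto
  have az: "a s h + ((1 - t) *\<^sub>R x + t *\<^sub>R y) * (a' s h - a s h) = (1-t) * ax s h + t * ay s h" for s h
    by (simp add: ax_def ay_def algebra_simps)
  have Az: "(\<Sum>s'\<in>UNIV. ((1-t) * ax s' h + t * ay s' h) * PS s') = (1-t) * (\<Sum>s'\<in>UNIV. ax s' h * PS s') + t * (\<Sum>s'\<in>UNIV. ay s' h * PS s')" for h
  proof -
    have "((1-t) * ax s' h + t * ay s' h) * PS s' = (1-t) * (ax s' h * PS s') + t * (ay s' h * PS s')" for s'
      by (simp add: algebra_simps)
    then show ?thesis by (simp add: sum.distrib sum_distrib_left)
  qed
  have Apos: "0 < (\<Sum>s'\<in>UNIV. c s' h * PS s')" if "\<And>s. 0 < c s h" for c h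
    using that PSpos by (intro sum_pos) auto
  have "Phi PS f (\<lambda>s h. (1-t) * ax s h + t * ay s h)
     = (\<Sum>s\<in>UNIV. \<Sum>h\<in>UNIV. PS s * (((1-t) * ax s h + t * ay s h) * f (((1-t) * (\<Sum>s'\<in>UNIV. ax s' h * PS s') + t * (\<Sum>s'\<in>UNIV. ay s' h * PS s')) / ((1-t) * ax s h + t * ay s h))))"
    unfolding Phi_def Az by (simp add: ac_simps)
  also have "\<dots> \<le> (\<Sum>s\<in>UNIV. \<Sum>h\<in>UNIV. PS s * ((1-t) * (ax s h * f ((\<Sum>s'\<in>UNIV. ax s' h * PS s') / ax s h)) + t * (ay s h * f ((\<Sum>s'\<in>UNIV. ay s' h * PS s') / ay s h))))"
    apply (intro sum_mono mult_left_mono persp[OF cv])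
    using axp Apos[of ax] Apos[of ay] t PSpos by (auto intro: less_imp_le)
  also have "\<dots> = (1 - t) * Phi PS f ax + t * Phi PS f ay"
  proof -
    have X: "Phi PS f c = (\<Sum>s\<in>UNIV. \<Sum>h\<in>UNIV. PS s * (c s h * f ((\<Sum>s'\<in>UNIV. c s' h * PS s') / c s h)))" for c
      unfolding Phi_def by (simp add: mult.commute mult.left_commute mult.assoc)
    show ?thesis unfolding X
      by (simp only: distrib_left sum.distrib sum_distrib_left mult.left_commute)
  qed
  finally show "Phi PS f (\<lambda>s h. a s h + ((1 - t) *\<^sub>R x + t *\<^sub>R y) * (a' s h - a s h))
      \<le> (1 - t) * Phi PS f (\<lambda>s h. a s h + x * (a' s h - a s h)) + t * Phi PS f (\<lambda>s h. a s h + y * (a' s h - a s h))"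
    unfolding az ax_def[symmetric] ay_def[symmetric] by (simp add: ax_def[abs_def] ay_def[abs_def])
qed



lemma fMI_Psi:
  fixes PYX :: "'x::finite \<Rightarrow> 'y::finite \<Rightarrow> real" and p :: "'x \<Rightarrow> real"
  assumes K: "is_kernel PYX" and Ppos: "\<forall>x y. 0 < PYX x y" and pm: "is_pmf p"
  shows "fMI f (range (to_nat::'x\<Rightarrow>nat)) (range (to_nat::'y\<Rightarrow>nat))
           (\<lambda>u v. p (from_nat u) * PYX (from_nat u) (from_nat v)) = ereal (Psi PYX f p)"
proof -
  have Ksum: "(\<Sum>y\<in>UNIV. PYX x y) = 1" for x using K by (simp add: is_kernel_def is_pmf_def)
  have p0: "0 \<le> p x" for x using pm by (simp add: is_pmf_def)
  have p1: "(\<Sum>x\<in>UNIV. p x) = 1" using pm by (simp add: is_pmf_def)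
  have Bpos: "0 < (\<Sum>x'\<in>UNIV. p x' * PYX x' y)" for y
  proof -
    obtain x0 where "p x0 \<noteq> 0" using p1 by (metis (full_types) sum.neutral zero_neq_one)
    then have "0 < p x0 * PYX x0 y" using p0[of x0] Ppos by (simp add: order_le_neq_trans)
    moreover have "p x0 * PYX x0 y \<le> (\<Sum>x'\<in>UNIV. p x' * PYX x' y)"
    proof (rule member_le_sum)
      show "0 \<le> p x * PYX x y" for x using p0[of x] Ppos by (simp add: less_imp_le)
    qed auto
    ultimately show ?thesis by linarith
  qed
  have trm: "(let pu = (\<Sum>y'\<in>UNIV. p x * PYX x y'); pv = (\<Sum>x'\<in>UNIV. p x' * PYX x' y) in
      if 0 < p x * PYX x y then ereal (p x * PYX x y * f (pu * pv / (p x * PYX x y)))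
      else if 0 < pu * pv then ereal (pu * pv) * fprime_inf f else 0)
    = ereal (p x * PYX x y * f ((\<Sum>x'\<in>UNIV. PYX x' y * p x') / PYX x y))" for x y
  proof -
    have pu: "(\<Sum>y'\<in>UNIV. p x * PYX x y') = p x" by (simp add: sum_distrib_left[symmetric] Ksum)
    have pv: "(\<Sum>x'\<in>UNIV. p x' * PYX x' y) = (\<Sum>x'\<in>UNIV. PYX x' y * p x')" by (simp add: mult.commute)
    show ?thesis
    proof (cases "p x = 0")
      case True then show ?thesis by (simp add: pu Let_def)
    next
      case False
      then have "0 < p x" using p0[of x] by simp
      then show ?thesis using Ppos[rule_format, of x y] unfolding pu pv Let_def by simp
    qed
  qed
  show ?thesis
    unfolding fMI_def
    by (simp add: sum.reindex inj_on_def trm Psi_def)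
qed

lemma Psi_concave:
  fixes PYX :: "'x::finite \<Rightarrow> 'y::finite \<Rightarrow> real" and p q :: "'x \<Rightarrow> real"
  assumes sad: "saddle_property f" and K: "is_kernel PYX" and Ppos: "\<forall>x y. 0 < PYX x y"
    and pm: "is_pmf p" and qm: "is_pmf q" and th: "0 \<le> \<theta>" "\<theta> \<le> 1"
  shows "\<theta> * Psi PYX f p + (1 - \<theta>) * Psi PYX f q \<le> Psi PYX f (\<lambda>x. \<theta> * p x + (1 - \<theta>) * q x)"
proof -
  define U where "U = range (to_nat::'x\<Rightarrow>nat)"
  define V where "V = range (to_nat::'y\<Rightarrow>nat)"
  define k where "k u v = PYX (from_nat u) (from_nat v)" for u v
  have rm: "is_pmf (\<lambda>x. \<theta> * p x + (1 - \<theta>) * q x)"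
    using pm qm th by (auto simp: is_pmf_def sum.distrib sum_distrib_left[symmetric])
  have fU: "finite U" "finite V" unfolding U_def V_def by auto
  have kk: "\<forall>u\<in>U. (\<forall>v\<in>V. 0 \<le> k u v) \<and> (\<Sum>v\<in>V. k u v) = 1"
    using K Ppos by (auto simp: U_def V_def k_def sum.reindex inj_on_def is_kernel_def is_pmf_def intro: less_imp_le)
  have pp1: "\<forall>u\<in>U. 0 \<le> r (from_nat u)" if "is_pmf r" for r :: "'x \<Rightarrow> real"
    using that by (auto simp: U_def is_pmf_def)
  have pp2: "(\<Sum>u\<in>U. r (from_nat u)) = 1" if "is_pmf r" for r :: "'x \<Rightarrow> real"
    using that by (auto simp: U_def sum.reindex inj_on_def is_pmf_def)
  from sad have H: "\<forall>(U::nat set) (V::nat set) (k::nat \<Rightarrow> nat \<Rightarrow> real).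
       finite U \<longrightarrow> finite V \<longrightarrow>
       (\<forall>u\<in>U. (\<forall>v\<in>V. 0 \<le> k u v) \<and> (\<Sum>v\<in>V. k u v) = 1) \<longrightarrow>
       (\<forall>p q \<theta>. (\<forall>u\<in>U. 0 \<le> p u) \<longrightarrow> (\<Sum>u\<in>U. p u) = 1 \<longrightarrow>
                 (\<forall>u\<in>U. 0 \<le> q u) \<longrightarrow> (\<Sum>u\<in>U. q u) = 1 \<longrightarrow>
                 0 \<le> \<theta> \<longrightarrow> \<theta> \<le> 1 \<longrightarrow>
          ereal \<theta> * fMI f U V (\<lambda>u v. p u * k u v)
            + ereal (1 - \<theta>) * fMI f U V (\<lambda>u v. q u * k u v)
          \<le> fMI f U V (\<lambda>u v. (\<theta> * p u + (1 - \<theta>) * q u) * k u v))"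
    unfolding saddle_property_def by (rule conjunct2)
  have "ereal \<theta> * fMI f U V (\<lambda>u v. p (from_nat u) * k u v)
            + ereal (1 - \<theta>) * fMI f U V (\<lambda>u v. q (from_nat u) * k u v)
          \<le> fMI f U V (\<lambda>u v. (\<theta> * p (from_nat u) + (1 - \<theta>) * q (from_nat u)) * k u v)"
    by (rule H[rule_format, OF fU(1) fU(2)]) (use kk pp1[OF pm] pp2[OF pm] pp1[OF qm] pp2[OF qm] th in auto)
  moreover have FM: "fMI f U V (\<lambda>u v. r (from_nat u) * k u v) = ereal (Psi PYX f r)" if "is_pmf r" for r
    unfolding U_def V_def k_def by (rule fMI_Psi[OF K Ppos that])
  moreover have "fMI f U V (\<lambda>u v. (\<theta> * p (from_nat u) + (1 - \<theta>) * q (from_nat u)) * k u v)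
     = ereal (Psi PYX f (\<lambda>x. \<theta> * p x + (1 - \<theta>) * q x))"
    using FM[OF rm] by simp
  ultimately have "ereal \<theta> * ereal (Psi PYX f p) + ereal (1 - \<theta>) * ereal (Psi PYX f q)
        \<le> ereal (Psi PYX f (\<lambda>x. \<theta> * p x + (1 - \<theta>) * q x))"
    using pm qm rm by simp
  then show ?thesis by simp
qed


lemma jensen_w:
  fixes f :: "real \<Rightarrow> real" and w r :: "'i \<Rightarrow> real"
  assumes cv: "convex_on {0<..} f" and fin: "finite I"
    and w: "\<And>i. i \<in> I \<Longrightarrow> 0 \<le> w i" and r: "\<And>i. i \<in> I \<Longrightarrow> 0 < r i"
    and W: "0 < (\<Sum>i\<in>I. w i)"
  shows "(\<Sum>i\<in>I. w i) * f ((\<Sum>i\<in>I. w i * r i) / (\<Sum>i\<in>I. w i)) \<le> (\<Sum>i\<in>I. w i * f (r i))"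
proof -
  define S where "S = (\<Sum>i\<in>I. w i)"
  have ne: "I \<noteq> {}" using W by auto
  have "f (\<Sum>i\<in>I. (w i / S) *\<^sub>R r i) \<le> (\<Sum>i\<in>I. (w i / S) * f (r i))"
    by (rule convex_on_sum[OF fin ne cv]) (use W w r in \<open>auto simp: S_def sum_divide_distrib[symmetric]\<close>)
  moreover have "(\<Sum>i\<in>I. (w i / S) *\<^sub>R r i) = (\<Sum>i\<in>I. w i * r i) / S"
    by (simp add: sum_divide_distrib)
  moreover have "(\<Sum>i\<in>I. (w i / S) * f (r i)) = (\<Sum>i\<in>I. w i * f (r i)) / S"
    by (simp add: sum_divide_distrib)
  ultimately have "f ((\<Sum>i\<in>I. w i * r i) / S) \<le> (\<Sum>i\<in>I. w i * f (r i)) / S" by simp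
  then show ?thesis using W unfolding S_def[symmetric] by (simp add: field_simps)
qed

lemma pmf_pos_sum:
  fixes p c :: "'a::finite \<Rightarrow> real"
  assumes "is_pmf p" "\<And>x. 0 < c x"
  shows "0 < (\<Sum>x\<in>UNIV. p x * c x)"
proof -
  have p0: "0 \<le> p x" for x using assms by (simp add: is_pmf_def)
  obtain x0 where "p x0 \<noteq> 0" using assms(1) unfolding is_pmf_def by (metis (full_types) sum.neutral zero_neq_one)
  then have "0 < p x0 * c x0" using p0[of x0] assms(2)[of x0] by (simp add: order_le_neq_trans)
  moreover have "p x0 * c x0 \<le> (\<Sum>x\<in>UNIV. p x * c x)"
  proof (rule member_le_sum)
    show "0 \<le> p x * c x" for x using p0[of x] assms(2)[of x] by (simp add: less_imp_le)
  qed auto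
  ultimately show ?thesis by linarith
qed

lemma DPI:
  fixes f :: "real \<Rightarrow> real" and PS :: "'s::finite \<Rightarrow> real" and PYX :: "'x::finite \<Rightarrow> 'y::finite \<Rightarrow> real"
    and A :: "'s \<Rightarrow> 'x \<Rightarrow> real" and B :: "'y \<Rightarrow> 'h::finite \<Rightarrow> real"
  assumes cv: "convex_on {0<..} f" and PSpos: "\<forall>s. 0 < PS s"
    and Ppos: "\<forall>x y. 0 < PYX x y" and AK: "is_kernel A" and BK: "is_kernel B"
    and apos: "\<forall>s h. 0 < (\<Sum>x\<in>UNIV. A s x * (\<Sum>y\<in>UNIV. PYX x y * B y h))"
  shows "Phi PS f (\<lambda>s h. \<Sum>x\<in>UNIV. A s x * (\<Sum>y\<in>UNIV. PYX x y * B y h))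
         \<le> Psi PYX f (\<lambda>x. \<Sum>s\<in>UNIV. PS s * A s x)"
proof -
  define a' where "a' s h = (\<Sum>x\<in>UNIV. A s x * (\<Sum>y\<in>UNIV. PYX x y * B y h))" for s h
  define b' where "b' x = (\<Sum>s\<in>UNIV. PS s * A s x)" for x
  define J where "J s y = PS s * (\<Sum>x\<in>UNIV. A s x * PYX x y)" for s y
  define PY where "PY y = (\<Sum>x'\<in>UNIV. PYX x' y * b' x')" for y
  have A0: "0 \<le> A s x" for s x using AK by (simp add: is_kernel_def is_pmf_def)
  have B0: "0 \<le> B y h" for y h using BK by (simp add: is_kernel_def is_pmf_def)
  have B1: "(\<Sum>h\<in>UNIV. B y h) = 1" for y using BK by (simp add: is_kernel_def is_pmf_def)
  have A1: "(\<Sum>x\<in>UNIV. A s x) = 1" for s using AK by (simp add: is_kernel_def is_pmf_def)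
  have Jpos: "0 < J s y" for s y
    unfolding J_def using PSpos pmf_pos_sum[of "A s" "\<lambda>x. PYX x y"] AK Ppos by (simp add: is_kernel_def)
  have f1: "PY y = (\<Sum>s\<in>UNIV. J s y)" for y
  proof -
    have "PY y = (\<Sum>x'\<in>UNIV. \<Sum>s\<in>UNIV. PS s * (A s x' * PYX x' y))"
      by (simp add: PY_def b'_def sum_distrib_left mult_ac)
    also have "\<dots> = (\<Sum>s\<in>UNIV. \<Sum>x'\<in>UNIV. PS s * (A s x' * PYX x' y))" by (rule sum.swap)
    also have "\<dots> = (\<Sum>s\<in>UNIV. J s y)" by (simp add: J_def sum_distrib_left)
    finally show ?thesis .
  qed
  have PYpos: "0 < PY y" for y unfolding f1 using Jpos by (intro sum_pos) auto
  have f2: "a' s h * PS s = (\<Sum>y\<in>UNIV. J s y * B y h)" for s h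
  proof -
    have "a' s h * PS s = (\<Sum>x\<in>UNIV. \<Sum>y\<in>UNIV. (PS s * (A s x * PYX x y)) * B y h)"
      by (simp add: a'_def sum_distrib_left sum_distrib_right mult_ac)
    also have "\<dots> = (\<Sum>y\<in>UNIV. \<Sum>x\<in>UNIV. (PS s * (A s x * PYX x y)) * B y h)" by (rule sum.swap)
    also have "\<dots> = (\<Sum>y\<in>UNIV. J s y * B y h)" by (simp add: J_def sum_distrib_left sum_distrib_right)
    finally show ?thesis .
  qed
  have f3: "(\<Sum>s'\<in>UNIV. a' s' h * PS s') = (\<Sum>y\<in>UNIV. PY y * B y h)" for h
  proof -
    have "(\<Sum>s'\<in>UNIV. a' s' h * PS s') = (\<Sum>s'\<in>UNIV. \<Sum>y\<in>UNIV. J s' y * B y h)" unfolding f2 ..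
    also have "\<dots> = (\<Sum>y\<in>UNIV. \<Sum>s'\<in>UNIV. J s' y * B y h)" by (rule sum.swap)
    also have "\<dots> = (\<Sum>y\<in>UNIV. PY y * B y h)" by (simp add: f1 sum_distrib_right)
    finally show ?thesis .
  qed
  define r where "r s y = PS s * PY y / J s y" for s y
  have step1: "a' s h * PS s * f ((\<Sum>s'\<in>UNIV. a' s' h * PS s') / a' s h)
      \<le> (\<Sum>y\<in>UNIV. J s y * B y h * f (r s y))" for s h
  proof -
    have W: "0 < (\<Sum>y\<in>UNIV. J s y * B y h)" unfolding f2[symmetric] using apos PSpos by (simp add: a'_def)
    have nn: "0 \<le> J s y * B y h" for y using Jpos[of s y] B0[of y h] by simp
    have j: "(\<Sum>y\<in>UNIV. J s y * B y h) * f ((\<Sum>y\<in>UNIV. J s y * B y h * r s y) / (\<Sum>y\<in>UNIV. J s y * B y h))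
        \<le> (\<Sum>y\<in>UNIV. J s y * B y h * f (r s y))"
      by (rule jensen_w[OF cv]) (use nn Jpos PSpos PYpos W in \<open>auto simp: r_def\<close>)
    have "(\<Sum>y\<in>UNIV. J s y * B y h * r s y) = PS s * (\<Sum>s'\<in>UNIV. a' s' h * PS s')"
    proof -
      have e: "J s y * B y h * r s y = PS s * (PY y * B y h)" for y
        using Jpos[of s y] by (simp add: r_def field_simps)
      have "(\<Sum>y\<in>UNIV. J s y * B y h * r s y) = (\<Sum>y\<in>UNIV. PS s * (PY y * B y h))"
        by (rule sum.cong[OF refl e])
      then show ?thesis unfolding f3 by (simp add: sum_distrib_left)
    qed
    moreover have "a' s h \<noteq> 0" "PS s \<noteq> 0" using apos PSpos by (auto simp: a'_def) (metis less_irrefl)+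
    ultimately have "(\<Sum>y\<in>UNIV. J s y * B y h * r s y) / (\<Sum>y\<in>UNIV. J s y * B y h) = (\<Sum>s'\<in>UNIV. a' s' h * PS s') / a' s h"
      unfolding f2[symmetric] by simp
    then show ?thesis using j unfolding f2[symmetric] by simp
  qed
  have step2: "J s y * f (r s y) \<le> (\<Sum>x\<in>UNIV. PS s * A s x * PYX x y * f (PY y / PYX x y))" for s y
  proof -
    have Js: "(\<Sum>x\<in>UNIV. PS s * A s x * PYX x y) = J s y" unfolding J_def by (simp add: sum_distrib_left mult_ac)
    have nn: "0 \<le> PS s * A s x * PYX x y" for x
      using PSpos[rule_format, of s] A0[of s x] Ppos[rule_format, of x y] by simp
    have j: "(\<Sum>x\<in>UNIV. PS s * A s x * PYX x y) * f ((\<Sum>x\<in>UNIV. PS s * A s x * PYX x y * (PY y / PYX x y)) / (\<Sum>x\<in>UNIV. PS s * A s x * PYX x y))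
        \<le> (\<Sum>x\<in>UNIV. PS s * A s x * PYX x y * f (PY y / PYX x y))"
      by (rule jensen_w[OF cv]) (use nn Jpos PSpos PYpos Ppos Js in auto)
    have "(\<Sum>x\<in>UNIV. PS s * A s x * PYX x y * (PY y / PYX x y)) = PS s * PY y"
    proof -
      have e: "PS s * A s x * PYX x y * (PY y / PYX x y) = A s x * (PS s * PY y)" for x
        using Ppos[rule_format, of x y] by (simp add: field_simps)
      have "(\<Sum>x\<in>UNIV. PS s * A s x * PYX x y * (PY y / PYX x y)) = (\<Sum>x\<in>UNIV. A s x * (PS s * PY y))"
        by (rule sum.cong[OF refl e])
      then show ?thesis by (simp add: sum_distrib_right[symmetric] A1)
    qed
    then show ?thesis using j unfolding Js r_def by simp
  qed
  have "Phi PS f a' \<le> (\<Sum>s\<in>UNIV. \<Sum>h\<in>UNIV. \<Sum>y\<in>UNIV. J s y * B y h * f (r s y))"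
    unfolding Phi_def by (intro sum_mono step1)
  also have "\<dots> = (\<Sum>s\<in>UNIV. \<Sum>y\<in>UNIV. J s y * f (r s y))"
  proof -
    have "(\<Sum>h\<in>UNIV. \<Sum>y\<in>UNIV. J s y * B y h * f (r s y)) = (\<Sum>y\<in>UNIV. J s y * f (r s y))" for s
    proof -
      have "(\<Sum>h\<in>UNIV. \<Sum>y\<in>UNIV. J s y * B y h * f (r s y)) = (\<Sum>y\<in>UNIV. \<Sum>h\<in>UNIV. J s y * f (r s y) * B y h)"
        by (subst sum.swap) (simp add: mult_ac)
      also have "\<dots> = (\<Sum>y\<in>UNIV. J s y * f (r s y))"
        by (simp add: sum_distrib_left[symmetric] B1)
      finally show ?thesis .
    qed
    then show ?thesis by simp
  qed
  also have "\<dots> \<le> (\<Sum>s\<in>UNIV. \<Sum>y\<in>UNIV. \<Sum>x\<in>UNIV. PS s * A s x * PYX x y * f (PY y / PYX x y))"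
    by (intro sum_mono step2)
  also have "\<dots> = Psi PYX f b'"
  proof -
    have "(\<Sum>s\<in>UNIV. \<Sum>y\<in>UNIV. \<Sum>x\<in>UNIV. PS s * A s x * PYX x y * f (PY y / PYX x y))
        = (\<Sum>s\<in>UNIV. \<Sum>x\<in>UNIV. \<Sum>y\<in>UNIV. PS s * A s x * PYX x y * f (PY y / PYX x y))"
      by (rule sum.cong[OF refl], rule sum.swap)
    also have "\<dots> = (\<Sum>x\<in>UNIV. \<Sum>s\<in>UNIV. \<Sum>y\<in>UNIV. PS s * A s x * PYX x y * f (PY y / PYX x y))"
      by (rule sum.swap)
    also have "\<dots> = (\<Sum>x\<in>UNIV. \<Sum>y\<in>UNIV. \<Sum>s\<in>UNIV. PS s * A s x * PYX x y * f (PY y / PYX x y))"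
      by (rule sum.cong[OF refl], rule sum.swap)
    also have "\<dots> = Psi PYX f b'"
      unfolding Psi_def PY_def b'_def by (simp add: sum_distrib_right)
    finally show ?thesis .
  qed
  finally show ?thesis unfolding a'_def[abs_def] b'_def[abs_def] .
qed




lemma Psi_tangent:
  fixes PYX :: "'x::finite \<Rightarrow> 'y::finite \<Rightarrow> real" and b b' :: "'x \<Rightarrow> real"
  assumes fd: "\<And>z. z > 0 \<Longrightarrow> (f has_real_derivative f' z) (at z)"
    and sad: "saddle_property f" and K: "is_kernel PYX" and Ppos: "\<forall>x y. 0 < PYX x y"
    and bm: "is_pmf b" and b'm: "is_pmf b'"
  shows "Psi PYX f b' \<le> Psi PYX f b + (\<Sum>x\<in>UNIV. (b' x - b x) * dPsi PYX f b x)"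
proof -
  define h where "h t = Psi PYX f (\<lambda>x. b x + t * (b' x - b x))" for t
  have pm: "is_pmf (\<lambda>x. b x + t * (b' x - b x))" if "t \<in> {0..1}" for t
  proof -
    have "(\<lambda>x. b x + t * (b' x - b x)) = (\<lambda>x. (1 - t) * b x + t * b' x)" by (simp add: algebra_simps)
    then show ?thesis using bm b'm that
      by (auto simp: is_pmf_def sum.distrib sum_distrib_left[symmetric] intro!: add_nonneg_nonneg mult_nonneg_nonneg)
  qed
  have cvx: "convex_on {0..1} (\<lambda>t. - h t)"
  proof (rule convex_onI)
    show "convex {0..1::real}" by simp
    fix t x y :: real assume t: "0 < t" "t < 1" and xy: "x \<in> {0..1}" "y \<in> {0..1}"
    have "(1 - t) * h x + (1 - (1 - t)) * h y \<le> Psi PYX f (\<lambda>z. (1 - t) * (b z + x * (b' z - b z)) + (1 - (1 - t)) * (b z + y * (b' z - b z)))"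
      unfolding h_def by (rule Psi_concave[OF sad K Ppos pm[OF xy(1)] pm[OF xy(2)]]) (use t in auto)
    also have "(\<lambda>z. (1 - t) * (b z + x * (b' z - b z)) + (1 - (1 - t)) * (b z + y * (b' z - b z)))
        = (\<lambda>z. b z + ((1 - t) *\<^sub>R x + t *\<^sub>R y) * (b' z - b z))"
      by (simp add: algebra_simps)
    finally show "- h ((1 - t) *\<^sub>R x + t *\<^sub>R y) \<le> (1 - t) * - h x + t * - h y"
      unfolding h_def by simp
  qed
  have Bpos: "\<forall>y. 0 < (\<Sum>x'\<in>UNIV. PYX x' y * b x')"
    using pmf_pos_sum[OF bm, of "\<lambda>x. PYX x _"] Ppos by (simp add: mult.commute)
  have d: "(h has_real_derivative (\<Sum>x\<in>UNIV. (b' x - b x) * dPsi PYX f b x)) (at 0)"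
  proof -
    have eqW: "\<And>x. dPsi PYX f b x = WPsi PYX f f' b x" by (rule dPsi_eq[OF fd Ppos Bpos])
    show ?thesis unfolding h_def eqW by (rule Psi_dir_deriv[OF fd Ppos Bpos])
  qed
  have "(\<lambda>t. - h t) 0 + (- (\<Sum>x\<in>UNIV. (b' x - b x) * dPsi PYX f b x)) \<le> (\<lambda>t. - h t) 1"
    by (rule convex_tangent01[OF cvx]) (rule derivative_intros d)+
  moreover have "h 0 = Psi PYX f b" "h 1 = Psi PYX f b'" by (simp_all add: h_def)
  ultimately show ?thesis by simp
qed

lemma Phi_tangent:
  fixes PS :: "'s::finite \<Rightarrow> real" and a a' :: "'s \<Rightarrow> 'h::finite \<Rightarrow> real"
  assumes fd: "\<And>z. z > 0 \<Longrightarrow> (f has_real_derivative f' z) (at z)"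
    and cv: "convex_on {0<..} f" and PSpos: "\<forall>s. 0 < PS s"
    and apos: "\<forall>s h. 0 < a s h" and a'pos: "\<forall>s h. 0 < a' s h"
  shows "Phi PS f a + (\<Sum>s\<in>UNIV. \<Sum>h\<in>UNIV. (a' s h - a s h) * dPhi PS f a s h) \<le> Phi PS f a'"
proof -
  define g where "g t = Phi PS f (\<lambda>s h. a s h + t * (a' s h - a s h))" for t
  have d: "(g has_real_derivative (\<Sum>s\<in>UNIV. \<Sum>h\<in>UNIV. (a' s h - a s h) * dPhi PS f a s h)) (at 0)"
  proof -
    have eqW: "\<And>s h. dPhi PS f a s h = WPhi PS f f' a s h" by (rule dPhi_eq[OF fd PSpos apos])
    show ?thesis unfolding g_def eqW by (rule Phi_dir_deriv[OF fd PSpos apos])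
  qed
  have "g 0 + (\<Sum>s\<in>UNIV. \<Sum>h\<in>UNIV. (a' s h - a s h) * dPhi PS f a s h) \<le> g 1"
    by (rule convex_tangent01[OF _ d]) (unfold g_def, rule Phi_convex_seg[OF cv PSpos apos a'pos])
  moreover have "g 0 = Phi PS f a" "g 1 = Phi PS f a'" by (simp_all add: g_def)
  ultimately show ?thesis by simp
qed

lemma sum_UNIV4:
  fixes g :: "'a::finite \<times> 'b::finite \<times> 'c::finite \<times> 'd::finite \<Rightarrow> real"
  shows "(\<Sum>z\<in>UNIV. g z) = (\<Sum>a\<in>UNIV. \<Sum>b\<in>UNIV. \<Sum>c\<in>UNIV. \<Sum>d\<in>UNIV. g (a,b,c,d))"
  by (simp add: sum.cartesian_product UNIV_Times_UNIV[symmetric] del: UNIV_Times_UNIV)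

lemma eps_limit:
  fixes x y c :: real
  assumes "\<And>e. 0 < e \<Longrightarrow> e < 1 \<Longrightarrow> x \<le> (1 - e) * y + e * c"
  shows "x \<le> y"
proof -
  have lim: "((\<lambda>e. (1 - e) * y + e * c) \<longlongrightarrow> (1 - 0) * y + 0 * c) (at_right 0)"
    by (intro tendsto_intros)
  have ev: "eventually (\<lambda>e. x \<le> (1 - e) * y + e * c) (at_right (0::real))"
    unfolding eventually_at_right_field using assms by (auto intro!: exI[of _ 1])
  show ?thesis using tendsto_lowerbound[OF lim ev] by simp
qed


lemma obj_expand:
  fixes PS :: "'s::finite \<Rightarrow> real" and PYX :: "'x::finite \<Rightarrow> 'y::finite \<Rightarrow> real"
    and A :: "'s \<Rightarrow> 'x \<Rightarrow> real" and B :: "'y \<Rightarrow> 'h::finite \<Rightarrow> real"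
    and \<delta> :: "'s \<Rightarrow> 'h \<Rightarrow> real" and \<rho> :: "'x \<Rightarrow> real"
  assumes K: "is_kernel PYX" and BK: "is_kernel B"
  shows "(\<Sum>z\<in>UNIV. (\<lambda>(s,x,y,h). PS s * A s x * PYX x y * B y h) z * (\<delta> (fst z) (snd (snd (snd z))) + \<rho> (fst (snd z))))
     = (\<Sum>s\<in>UNIV. \<Sum>h\<in>UNIV. PS s * (\<Sum>x\<in>UNIV. A s x * (\<Sum>y\<in>UNIV. PYX x y * B y h)) * \<delta> s h)
       + (\<Sum>x\<in>UNIV. (\<Sum>s\<in>UNIV. PS s * A s x) * \<rho> x)"
proof -
  define T where "T s x y h = PS s * A s x * PYX x y * B y h" for s x y h
  have B1: "(\<Sum>h\<in>UNIV. B y h) = 1" for y using BK by (simp add: is_kernel_def is_pmf_def)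
  have K1: "(\<Sum>y\<in>UNIV. PYX x y) = 1" for x using K by (simp add: is_kernel_def is_pmf_def)
  have "(\<Sum>z\<in>UNIV. (\<lambda>(s,x,y,h). PS s * A s x * PYX x y * B y h) z * (\<delta> (fst z) (snd (snd (snd z))) + \<rho> (fst (snd z))))
     = (\<Sum>s\<in>UNIV. \<Sum>x\<in>UNIV. \<Sum>y\<in>UNIV. \<Sum>h\<in>UNIV. T s x y h * \<delta> s h + T s x y h * \<rho> x)"
    unfolding sum_UNIV4 by (simp add: T_def distrib_left)
  also have "\<dots> = (\<Sum>s\<in>UNIV. \<Sum>x\<in>UNIV. \<Sum>y\<in>UNIV. \<Sum>h\<in>UNIV. T s x y h * \<delta> s h)
       + (\<Sum>s\<in>UNIV. \<Sum>x\<in>UNIV. \<Sum>y\<in>UNIV. \<Sum>h\<in>UNIV. T s x y h * \<rho> x)"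
    by (simp only: sum.distrib)
  also have "(\<Sum>s\<in>UNIV. \<Sum>x\<in>UNIV. \<Sum>y\<in>UNIV. \<Sum>h\<in>UNIV. T s x y h * \<delta> s h)
      = (\<Sum>s\<in>UNIV. \<Sum>h\<in>UNIV. PS s * (\<Sum>x\<in>UNIV. A s x * (\<Sum>y\<in>UNIV. PYX x y * B y h)) * \<delta> s h)"
  proof (rule sum.cong[OF refl])
    fix s
    have "(\<Sum>x\<in>UNIV. \<Sum>y\<in>UNIV. \<Sum>h\<in>UNIV. T s x y h * \<delta> s h) = (\<Sum>x\<in>UNIV. \<Sum>h\<in>UNIV. \<Sum>y\<in>UNIV. T s x y h * \<delta> s h)"
      by (rule sum.cong[OF refl], rule sum.swap)
    also have "\<dots> = (\<Sum>h\<in>UNIV. \<Sum>x\<in>UNIV. \<Sum>y\<in>UNIV. T s x y h * \<delta> s h)" by (rule sum.swap)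
    also have "\<dots> = (\<Sum>h\<in>UNIV. PS s * (\<Sum>x\<in>UNIV. A s x * (\<Sum>y\<in>UNIV. PYX x y * B y h)) * \<delta> s h)"
      by (simp add: T_def sum_distrib_left sum_distrib_right mult_ac)
    finally show "(\<Sum>x\<in>UNIV. \<Sum>y\<in>UNIV. \<Sum>h\<in>UNIV. T s x y h * \<delta> s h) = \<dots>" .
  qed
  also have "(\<Sum>s\<in>UNIV. \<Sum>x\<in>UNIV. \<Sum>y\<in>UNIV. \<Sum>h\<in>UNIV. T s x y h * \<rho> x)
      = (\<Sum>x\<in>UNIV. (\<Sum>s\<in>UNIV. PS s * A s x) * \<rho> x)"
  proof -
    have e: "(\<Sum>y\<in>UNIV. \<Sum>h\<in>UNIV. T s x y h * \<rho> x) = PS s * A s x * \<rho> x" for s x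
    proof -
      have "(\<Sum>y\<in>UNIV. \<Sum>h\<in>UNIV. T s x y h * \<rho> x) = (\<Sum>y\<in>UNIV. PS s * A s x * \<rho> x * PYX x y * (\<Sum>h\<in>UNIV. B y h))"
        by (simp add: T_def sum_distrib_left mult_ac)
      also have "\<dots> = PS s * A s x * \<rho> x * (\<Sum>y\<in>UNIV. PYX x y)"
        by (simp add: B1 sum_distrib_left)
      finally show ?thesis by (simp add: K1)
    qed
    have "(\<Sum>s\<in>UNIV. \<Sum>x\<in>UNIV. \<Sum>y\<in>UNIV. \<Sum>h\<in>UNIV. T s x y h * \<rho> x) = (\<Sum>s\<in>UNIV. \<Sum>x\<in>UNIV. PS s * A s x * \<rho> x)"
      by (simp only: e)
    also have "\<dots> = (\<Sum>x\<in>UNIV. \<Sum>s\<in>UNIV. PS s * A s x * \<rho> x)" by (rule sum.swap)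
    also have "\<dots> = (\<Sum>x\<in>UNIV. (\<Sum>s\<in>UNIV. PS s * A s x) * \<rho> x)" by (simp add: sum_distrib_right)
    finally show ?thesis .
  qed
  finally show ?thesis .
qed

lemma obj_lin:
  fixes PS :: "'s::finite \<Rightarrow> real" and a' D1 :: "'s \<Rightarrow> 'h::finite \<Rightarrow> real" and b' D2 nub :: "'x::finite \<Rightarrow> real"
  assumes PSpos: "\<forall>s. 0 < PS s" and a1: "\<And>s. (\<Sum>h\<in>UNIV. a' s h) = 1" and b1: "(\<Sum>x\<in>UNIV. b' x) = 1"
  shows "(\<Sum>s\<in>UNIV. \<Sum>h\<in>UNIV. PS s * a' s h * (- (lam / PS s) * D1 s h + mua s)) + (\<Sum>x\<in>UNIV. b' x * (lam * D2 x + mub + nub x))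
    = lam * ((\<Sum>x\<in>UNIV. b' x * D2 x) - (\<Sum>s\<in>UNIV. \<Sum>h\<in>UNIV. a' s h * D1 s h)) + (\<Sum>s\<in>UNIV. PS s * mua s) + mub + (\<Sum>x\<in>UNIV. nub x * b' x)"
proof -
  have e1: "PS s * a' s h * (- (lam / PS s) * D1 s h + mua s) = - (lam * (a' s h * D1 s h)) + PS s * mua s * a' s h" for s h
    using PSpos[rule_format, of s] by (simp add: field_simps)
  have s1: "(\<Sum>s\<in>UNIV. \<Sum>h\<in>UNIV. PS s * a' s h * (- (lam / PS s) * D1 s h + mua s))
     = - (lam * (\<Sum>s\<in>UNIV. \<Sum>h\<in>UNIV. a' s h * D1 s h)) + (\<Sum>s\<in>UNIV. PS s * mua s)"
  proof -
    have "(\<Sum>s\<in>UNIV. \<Sum>h\<in>UNIV. PS s * a' s h * (- (lam / PS s) * D1 s h + mua s))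
       = (\<Sum>s\<in>UNIV. - (lam * (\<Sum>h\<in>UNIV. a' s h * D1 s h)) + PS s * mua s * (\<Sum>h\<in>UNIV. a' s h))"
      unfolding e1 by (simp only: sum.distrib sum_negf sum_distrib_left)
    also have "\<dots> = (\<Sum>s\<in>UNIV. - (lam * (\<Sum>h\<in>UNIV. a' s h * D1 s h)) + PS s * mua s)"
      by (simp add: a1)
    also have "\<dots> = - (lam * (\<Sum>s\<in>UNIV. \<Sum>h\<in>UNIV. a' s h * D1 s h)) + (\<Sum>s\<in>UNIV. PS s * mua s)"
      by (simp only: sum.distrib sum_negf sum_distrib_left)
    finally show ?thesis .
  qed
  have s2: "(\<Sum>x\<in>UNIV. b' x * (lam * D2 x + mub + nub x)) = lam * (\<Sum>x\<in>UNIV. b' x * D2 x) + mub + (\<Sum>x\<in>UNIV. nub x * b' x)"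
  proof -
    have "(\<Sum>x\<in>UNIV. b' x * (lam * D2 x + mub + nub x)) = lam * (\<Sum>x\<in>UNIV. b' x * D2 x) + mub * (\<Sum>x\<in>UNIV. b' x) + (\<Sum>x\<in>UNIV. nub x * b' x)"
      by (simp add: distrib_left sum.distrib sum_distrib_left mult_ac)
    then show ?thesis using b1 by simp
  qed
  show ?thesis unfolding s1 s2 by (simp add: algebra_simps)
qed
theorem theorem4p1:
  fixes PS :: "'s::finite \<Rightarrow> real" and PYX :: "'x::finite \<Rightarrow> 'y::finite \<Rightarrow> real"
    and f :: "real \<Rightarrow> real"
    and Q :: "'s \<times> 'x \<times> 'y \<times> 'h::finite \<Rightarrow> real"
    and lam mub :: real and mua :: "'s \<Rightarrow> real" and nub :: "'x \<Rightarrow> real"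
    and a :: "'s \<Rightarrow> 'h \<Rightarrow> real" and b :: "'x \<Rightarrow> real"
    and \<delta> :: "'s \<Rightarrow> 'h \<Rightarrow> real" and \<rho> :: "'x \<Rightarrow> real"
  assumes PS_pmf: "is_pmf PS" and PS_pos: "\<forall>s. 0 < PS s"
    and PYX_kernel: "is_kernel PYX" and PYX_pos: "\<forall>x y. 0 < PYX x y"
    and f_C1: "f C1_differentiable_on {0<..}"
    and f_saddle: "saddle_property f"
    and Q_in: "Q \<in> Qset PS PYX"
    and a_def: "a = (\<lambda>s h. marg_SH Q s h / PS s)"
    and b_def: "b = marg_X Q"
    and a_pos: "\<forall>s h. 0 < a s h"
    and lam_nonneg: "0 \<le> lam"
    and compl: "lam * (Psi PYX f b - Phi PS f a) = 0"
    and nub_nonneg: "\<forall>x. 0 \<le> nub x"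
    and nub_b: "(\<Sum>x\<in>UNIV. nub x * b x) = 0"
    and \<delta>_def: "\<delta> = (\<lambda>s h. - (lam / PS s) * dPhi PS f a s h + mua s)"
    and \<rho>_def: "\<rho> = (\<lambda>x. lam * dPsi PYX f b x + mub + nub x)"
  shows "\<forall>Q' \<in> Qset PS PYX.
           (\<Sum>z\<in>UNIV. Q z * (\<delta> (fst z) (snd (snd (snd z))) + \<rho> (fst (snd z))))
         \<le> (\<Sum>z\<in>UNIV. Q' z * (\<delta> (fst z) (snd (snd (snd z))) + \<rho> (fst (snd z))))"
  proof -
  from Q_in obtain A B where AK: "is_kernel A" and BK: "is_kernel B"
    and Qeq: "Q = (\<lambda>(s,x,y,h). PS s * A s x * PYX x y * B y h)" unfolding Qset_def by blast
  have fd: "\<And>z. z > 0 \<Longrightarrow> (f has_real_derivative deriv f z) (at z)"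
    using f_C1 unfolding C1_differentiable_on_eq by (simp add: DERIV_deriv_iff_real_differentiable)
  have cv: "convex_on {0<..} f" using f_saddle unfolding saddle_property_def by simp
  have PSne: "PS s \<noteq> 0" for s using PS_pos by (metis less_irrefl)
  have K1: "(\<Sum>y\<in>UNIV. PYX x y) = 1" for x using PYX_kernel by (simp add: is_kernel_def is_pmf_def)
  have PS1: "(\<Sum>s\<in>UNIV. PS s) = 1" using PS_pmf by (simp add: is_pmf_def)
  define aK where "aK A' B' s h = (\<Sum>x\<in>UNIV. A' s x * (\<Sum>y\<in>UNIV. PYX x y * B' y h))"
    for A' :: "'s \<Rightarrow> 'x \<Rightarrow> real" and B' :: "'y \<Rightarrow> 'h \<Rightarrow> real" and s h
  define bK where "bK A' x = (\<Sum>s\<in>UNIV. PS s * A' s x)" for A' :: "'s \<Rightarrow> 'x \<Rightarrow> real" and x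
  define Obj where "Obj Q'' = (\<Sum>z\<in>UNIV. Q'' z * (\<delta> (fst z) (snd (snd (snd z))) + \<rho> (fst (snd z))))"
    for Q'' :: "'s \<times> 'x \<times> 'y \<times> 'h \<Rightarrow> real"
  have mSH: "marg_SH (\<lambda>(s,x,y,h). PS s * A' s x * PYX x y * B' y h) s h = PS s * aK A' B' s h" for A' B' s h
    unfolding marg_SH_def aK_def by (simp add: sum_distrib_left mult_ac)
  have mX: "marg_X (\<lambda>(s,x,y,h). PS s * A' s x * PYX x y * B' y h) x = bK A' x" if "is_kernel B'" for A' B' x
  proof -
    have B1: "(\<Sum>h\<in>UNIV. B' y h) = 1" for y using that by (simp add: is_kernel_def is_pmf_def)
    have "marg_X (\<lambda>(s,x,y,h). PS s * A' s x * PYX x y * B' y h) x = (\<Sum>s\<in>UNIV. PS s * A' s x * (\<Sum>y\<in>UNIV. PYX x y * (\<Sum>h\<in>UNIV. B' y h)))"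
      unfolding marg_X_def by (simp add: sum_distrib_left mult_ac)
    then show ?thesis by (simp add: B1 K1 bK_def)
  qed
  have aeq: "a = aK A B" unfolding a_def Qeq mSH using PSne by (simp add: fun_eq_iff)
  have beq: "b = bK A" unfolding b_def Qeq using mX[OF BK] by (simp add: fun_eq_iff)
  have bpmf: "is_pmf (bK A')" if "is_kernel A'" for A'
  proof -
    have A0: "0 \<le> A' s x" and A1: "(\<Sum>x\<in>UNIV. A' s x) = 1" for s x using that by (auto simp: is_kernel_def is_pmf_def)
    have "(\<Sum>x\<in>UNIV. bK A' x) = (\<Sum>s\<in>UNIV. PS s * (\<Sum>x\<in>UNIV. A' s x))"
      unfolding bK_def by (simp add: sum_distrib_left sum.swap[of "\<lambda>x s. PS s * A' s x"])
    moreover have "0 \<le> bK A' x" for x unfolding bK_def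
    proof (rule sum_nonneg)
      fix s show "0 \<le> PS s * A' s x" using A0[of s x] PS_pos by (simp add: less_imp_le)
    qed
    ultimately show ?thesis using PS1 unfolding is_pmf_def by (simp add: A1)
  qed
  have a1: "(\<Sum>h\<in>UNIV. aK A' B' s h) = 1" if "is_kernel A'" "is_kernel B'" for A' B' s
  proof -
    have A1: "(\<Sum>x\<in>UNIV. A' s x) = 1" using that by (auto simp: is_kernel_def is_pmf_def)
    have B1: "(\<Sum>h\<in>UNIV. B' y h) = 1" for y using that by (simp add: is_kernel_def is_pmf_def)
    have "(\<Sum>h\<in>UNIV. aK A' B' s h) = (\<Sum>x\<in>UNIV. A' s x * (\<Sum>y\<in>UNIV. PYX x y * (\<Sum>h\<in>UNIV. B' y h)))"
    proof -
      have "(\<Sum>h\<in>UNIV. aK A' B' s h) = (\<Sum>h\<in>UNIV. \<Sum>x\<in>UNIV. \<Sum>y\<in>UNIV. A' s x * (PYX x y * B' y h))"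
        unfolding aK_def by (simp add: sum_distrib_left)
      also have "\<dots> = (\<Sum>x\<in>UNIV. \<Sum>h\<in>UNIV. \<Sum>y\<in>UNIV. A' s x * (PYX x y * B' y h))" by (rule sum.swap)
      also have "\<dots> = (\<Sum>x\<in>UNIV. \<Sum>y\<in>UNIV. \<Sum>h\<in>UNIV. A' s x * (PYX x y * B' y h))"
        by (rule sum.cong[OF refl], rule sum.swap)
      also have "\<dots> = (\<Sum>x\<in>UNIV. A' s x * (\<Sum>y\<in>UNIV. PYX x y * (\<Sum>h\<in>UNIV. B' y h)))"
        by (simp add: sum_distrib_left)
      finally show ?thesis .
    qed
    then show ?thesis by (simp add: B1 K1 A1)
  qed
  have ObjF: "Obj (\<lambda>(s,x,y,h). PS s * A' s x * PYX x y * B' y h)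
      = lam * ((\<Sum>x\<in>UNIV. bK A' x * dPsi PYX f b x) - (\<Sum>s\<in>UNIV. \<Sum>h\<in>UNIV. aK A' B' s h * dPhi PS f a s h))
        + (\<Sum>s\<in>UNIV. PS s * mua s) + mub + (\<Sum>x\<in>UNIV. nub x * bK A' x)"
    if "is_kernel A'" "is_kernel B'" for A' B'
  proof -
    have "Obj (\<lambda>(s,x,y,h). PS s * A' s x * PYX x y * B' y h)
       = (\<Sum>s\<in>UNIV. \<Sum>h\<in>UNIV. PS s * aK A' B' s h * (- (lam / PS s) * dPhi PS f a s h + mua s))
         + (\<Sum>x\<in>UNIV. bK A' x * (lam * dPsi PYX f b x + mub + nub x))"
      unfolding Obj_def obj_expand[OF PYX_kernel that(2)] aK_def[symmetric] bK_def[symmetric]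
      by (simp add: \<delta>_def \<rho>_def)
    also have "\<dots> = lam * ((\<Sum>x\<in>UNIV. bK A' x * dPsi PYX f b x) - (\<Sum>s\<in>UNIV. \<Sum>h\<in>UNIV. aK A' B' s h * dPhi PS f a s h))
        + (\<Sum>s\<in>UNIV. PS s * mua s) + mub + (\<Sum>x\<in>UNIV. nub x * bK A' x)"
      by (rule obj_lin[OF PS_pos a1[OF that]]) (use bpmf[OF that(1)] in \<open>simp add: is_pmf_def\<close>)
    finally show ?thesis .
  qed
  have key: "Obj Q \<le> Obj (\<lambda>(s,x,y,h). PS s * A' s x * PYX x y * B' y h)"
    if A'K: "is_kernel A'" and B'K: "is_kernel B'" and a'pos: "\<forall>s h. 0 < aK A' B' s h" for A' B'
  proof -
    define a' where "a' = aK A' B'"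
    define b' where "b' = bK A'"
    have T1: "Psi PYX f b' \<le> Psi PYX f b + (\<Sum>x\<in>UNIV. (b' x - b x) * dPsi PYX f b x)"
      by (rule Psi_tangent[OF fd f_saddle PYX_kernel PYX_pos]) (use bpmf AK A'K beq in \<open>simp_all add: b'_def\<close>)
    have T2: "Phi PS f a + (\<Sum>s\<in>UNIV. \<Sum>h\<in>UNIV. (a' s h - a s h) * dPhi PS f a s h) \<le> Phi PS f a'"
      using Phi_tangent[OF fd cv PS_pos a_pos, of a'] a'pos unfolding a'_def by blast
    have T3: "Phi PS f a' \<le> Psi PYX f b'"
      using DPI[OF cv PS_pos PYX_pos A'K B'K] a'pos unfolding a'_def b'_def aK_def[abs_def] bK_def[abs_def]
      by simp
    have G: "(\<Sum>x\<in>UNIV. b' x * dPsi PYX f b x) - (\<Sum>s\<in>UNIV. \<Sum>h\<in>UNIV. a' s h * dPhi PS f a s h)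
       - ((\<Sum>x\<in>UNIV. b x * dPsi PYX f b x) - (\<Sum>s\<in>UNIV. \<Sum>h\<in>UNIV. a s h * dPhi PS f a s h))
       = (\<Sum>x\<in>UNIV. (b' x - b x) * dPsi PYX f b x) - (\<Sum>s\<in>UNIV. \<Sum>h\<in>UNIV. (a' s h - a s h) * dPhi PS f a s h)"
      by (simp add: left_diff_distrib sum_subtractf)
    have ge: "0 \<le>
        ((\<Sum>x\<in>UNIV. b' x * dPsi PYX f b x) - (\<Sum>s\<in>UNIV. \<Sum>h\<in>UNIV. a' s h * dPhi PS f a s h))
       - ((\<Sum>x\<in>UNIV. b x * dPsi PYX f b x) - (\<Sum>s\<in>UNIV. \<Sum>h\<in>UNIV. a s h * dPhi PS f a s h))
       + (Psi PYX f b - Phi PS f a)"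
      unfolding G using T1 T2 T3 by linarith
    have lamG: "lam * ((\<Sum>x\<in>UNIV. b x * dPsi PYX f b x) - (\<Sum>s\<in>UNIV. \<Sum>h\<in>UNIV. a s h * dPhi PS f a s h))
        \<le> lam * ((\<Sum>x\<in>UNIV. b' x * dPsi PYX f b x) - (\<Sum>s\<in>UNIV. \<Sum>h\<in>UNIV. a' s h * dPhi PS f a s h))"
    proof -
      have "0 \<le> lam * (((\<Sum>x\<in>UNIV. b' x * dPsi PYX f b x) - (\<Sum>s\<in>UNIV. \<Sum>h\<in>UNIV. a' s h * dPhi PS f a s h))
       - ((\<Sum>x\<in>UNIV. b x * dPsi PYX f b x) - (\<Sum>s\<in>UNIV. \<Sum>h\<in>UNIV. a s h * dPhi PS f a s h)))"
      proof -
        have "lam * 0 \<le> lam * (((\<Sum>x\<in>UNIV. b' x * dPsi PYX f b x) - (\<Sum>s\<in>UNIV. \<Sum>h\<in>UNIV. a' s h * dPhi PS f a s h))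
          - ((\<Sum>x\<in>UNIV. b x * dPsi PYX f b x) - (\<Sum>s\<in>UNIV. \<Sum>h\<in>UNIV. a s h * dPhi PS f a s h))
          + (Psi PYX f b - Phi PS f a))"
          by (rule mult_left_mono[OF ge lam_nonneg])
        then show ?thesis using compl by (simp add: distrib_left)
      qed
      then show ?thesis by (simp add: right_diff_distrib)
    qed
    have nn: "0 \<le> (\<Sum>x\<in>UNIV. nub x * b' x)"
      using nub_nonneg bpmf[OF A'K] by (auto simp: b'_def is_pmf_def intro!: sum_nonneg)
    have n0: "(\<Sum>x\<in>UNIV. nub x * bK A x) = 0" using nub_b beq by simp
    show ?thesis
      unfolding Qeq ObjF[OF AK BK] ObjF[OF A'K B'K] n0 aeq[symmetric] beq[symmetric]
      using lamG nn nub_b unfolding a'_def b'_def by linarith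
  qed
  show ?thesis
  proof (intro ballI)
    fix Q' :: "'s \<times> 'x \<times> 'y \<times> 'h \<Rightarrow> real" assume "Q' \<in> Qset PS PYX"
    then obtain A' B' where A'K: "is_kernel A'" and B'K: "is_kernel B'"
      and Q'eq: "Q' = (\<lambda>(s,x,y,h). PS s * A' s x * PYX x y * B' y h)" unfolding Qset_def by blast
    define n where "n = real (card (UNIV :: 'h set))"
    have npos: "0 < n" unfolding n_def by simp
    define U where "U y h = 1 / n" for y :: 'y and h :: 'h
    define Be where "Be e y h = (1 - e) * B' y h + e * U y h" for e :: real and y :: 'y and h :: 'h
    have UK: "is_kernel U" unfolding is_kernel_def is_pmf_def U_def using npos by (simp add: n_def)
    have B'0: "0 \<le> B' y h" and B'1: "(\<Sum>h\<in>UNIV. B' y h) = 1" for y h using B'K by (auto simp: is_kernel_def is_pmf_def)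
    have BeK: "is_kernel (Be e)" if "0 < e" "e < 1" for e
      unfolding is_kernel_def is_pmf_def Be_def
      using that B'0 npos by (auto simp: sum.distrib sum_distrib_left[symmetric] B'1 U_def n_def intro!: add_nonneg_nonneg)
    have Bepos: "0 < Be e y h" if "0 < e" "e < 1" for e y h
    proof -
      have "0 \<le> (1 - e) * B' y h" using that B'0 by simp
      moreover have "0 < e * U y h" using that npos by (simp add: U_def)
      ultimately show ?thesis unfolding Be_def by linarith
    qed
    have aepos: "\<forall>s h. 0 < aK A' (Be e) s h" if "0 < e" "e < 1" for e
    proof (intro allI)
      fix s h
      have "0 < (\<Sum>y\<in>UNIV. PYX x y * Be e y h)" for x
        using pmf_pos_sum[of "PYX x" "\<lambda>y. Be e y h"] PYX_kernel Bepos[OF that] by (simp add: is_kernel_def)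
      then show "0 < aK A' (Be e) s h" unfolding aK_def
        using pmf_pos_sum[of "A' s" "\<lambda>x. \<Sum>y\<in>UNIV. PYX x y * Be e y h"] A'K by (simp add: is_kernel_def)
    qed
    have lin: "Obj (\<lambda>(s,x,y,h). PS s * A' s x * PYX x y * Be e y h)
        = (1 - e) * Obj Q' + e * Obj (\<lambda>(s,x,y,h). PS s * A' s x * PYX x y * U y h)" for e
    proof -
      have "(\<lambda>(s,x,y,h). PS s * A' s x * PYX x y * Be e y h)
          = (\<lambda>z. (1 - e) * Q' z + e * (\<lambda>(s,x,y,h). PS s * A' s x * PYX x y * U y h) z)"
        unfolding Q'eq Be_def by (auto simp: fun_eq_iff algebra_simps)
      then show ?thesis unfolding Obj_def
        by (simp add: distrib_right sum.distrib sum_distrib_left mult.assoc)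
    qed
    have "Obj Q \<le> Obj Q'"
    proof (rule eps_limit)
      fix e :: real assume e: "0 < e" "e < 1"
      show "Obj Q \<le> (1 - e) * Obj Q' + e * Obj (\<lambda>(s,x,y,h). PS s * A' s x * PYX x y * U y h)"
        using key[OF A'K BeK[OF e] aepos[OF e]] unfolding lin .
    qed
    then show "(\<Sum>z\<in>UNIV. Q z * (\<delta> (fst z) (snd (snd (snd z))) + \<rho> (fst (snd z))))
         \<le> (\<Sum>z\<in>UNIV. Q' z * (\<delta> (fst z) (snd (snd (snd z))) + \<rho> (fst (snd z))))"
      unfolding Obj_def .
  qed
qed


end
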